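(* For integers $n>1$ and even $m>3$, $\chi_{ld}(W_m[\overline{K_{n}}])=3$.
   Context: All graphs are finite, simple and undirected. For a graph $G=(V,E)$ of order $N$ without isolated vertices, a bijection $f\colon V\to\{1,2,\dots,N\}$ is a local distance antimagic labeling if $w(u)\neq w(v)$ for every edge $uv$, where $w(u)=\sum_{x\in N(u)}f(x)$ and $N(u)$ is the open neighborhood of $u$. $\chi_{ld}(G)$ is the minimum number of distinct weights over all local distance antimagic labelings of $G$. The wheel $W_m=C_m+K_1$ is the cycle $C_m$ together with a central vertex adjacent to all cycle vertices. $\overline{K_n}$ is the edgeless graph on $n$ vertices. The lexicographic product $G[H]$ has vertex set $V(G)\times V(H)$, with $(g,h)$ adjacent to $(g',h')$ iff $gg'\in E(G)$, or $g=g'$ and $hh'\in E(H)$. *)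

theory Defs
  imports Main
begin

text \<open>A finite simple graph is given by a vertex set V and a symmetric,
irreflexive adjacency relation adj (only its restriction to V matters).\<close>

definition nbhd :: "'a set \<Rightarrow> ('a \<Rightarrow> 'a \<Rightarrow> bool) \<Rightarrow> 'a \<Rightarrow> 'a set" where
  "nbhd V adj u = {x \<in> V. adj u x}"

definition vweight :: "'a set \<Rightarrow> ('a \<Rightarrow> 'a \<Rightarrow> bool) \<Rightarrow> ('a \<Rightarrow> nat) \<Rightarrow> 'a \<Rightarrow> nat" where
  "vweight V adj f u = (\<Sum>x\<in>nbhd V adj u. f x)"

definition local_dist_antimagic :: "'a set \<Rightarrow> ('a \<Rightarrow> 'a \<Rightarrow> bool) \<Rightarrow> ('a \<Rightarrow> nat) \<Rightarrow> bool" where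
  "local_dist_antimagic V adj f \<longleftrightarrow>
     bij_betw f V {1..card V} \<and>
     (\<forall>u\<in>V. \<forall>v\<in>V. adj u v \<longrightarrow> vweight V adj f u \<noteq> vweight V adj f v)"

definition chi_ld :: "'a set \<Rightarrow> ('a \<Rightarrow> 'a \<Rightarrow> bool) \<Rightarrow> nat" where
  "chi_ld V adj = Min {card (vweight V adj f ` V) | f. local_dist_antimagic V adj f}"

text \<open>Wheel W_m: vertex 0 is the centre, vertices 1..m form the cycle 1-2-...-m-1.\<close>
definition wheel_V :: "nat \<Rightarrow> nat set" where
  "wheel_V m = {0..m}"

definition wheel_adj :: "nat \<Rightarrow> nat \<Rightarrow> nat \<Rightarrow> bool" where
  "wheel_adj m i j \<longleftrightarrow>
     (i = 0 \<and> j \<in> {1..m}) \<or> (j = 0 \<and> i \<in> {1..m}) \<or>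
     (i \<in> {1..m} \<and> j \<in> {1..m} \<and> i \<noteq> j \<and> (j = i mod m + 1 \<or> i = j mod m + 1))"

definition empty_V :: "nat \<Rightarrow> nat set" where
  "empty_V n = {0..<n}"

definition empty_adj :: "nat \<Rightarrow> nat \<Rightarrow> bool" where
  "empty_adj i j \<longleftrightarrow> False"

definition lex_V :: "'a set \<Rightarrow> 'b set \<Rightarrow> ('a \<times> 'b) set" where
  "lex_V VG VH = VG \<times> VH"

definition lex_adj :: "('a \<Rightarrow> 'a \<Rightarrow> bool) \<Rightarrow> ('b \<Rightarrow> 'b \<Rightarrow> bool) \<Rightarrow> 'a \<times> 'b \<Rightarrow> 'a \<times> 'b \<Rightarrow> bool" where
  "lex_adj adjG adjH p q \<longleftrightarrow>
     adjG (fst p) (fst q) \<or> (fst p = fst q \<and> adjH (snd p) (snd q))"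

end

theory Submission
  imports Defs
begin

definition P :: "nat \<Rightarrow> nat \<Rightarrow> nat \<Rightarrow> nat" where
"P k i s = (if i = 0 then (if s = 0 then 0 else 4*k+1)
  else if odd i then (if s=0 then (i+1) div 2 else 2*k+1 - (i+1) div 2)
  else (if s=0 then 2*k + i div 2 else 4*k+1 - i div 2))"
definition T :: "nat \<Rightarrow> nat \<Rightarrow> nat \<Rightarrow> nat" where
"T k i a = (if i=0 then (if a=0 then 0 else if a=1 then 6*k+1 else 6*k+2)
  else if a = 0 then i
  else if odd i then (if a=1 then 3*k+1-(i+1) div 2 else 5*k+1-(i+1) div 2)
  else (if a=1 then 4*k+1 - i div 2 else 6*k+1 - i div 2))"
lemma cases3: "(i::nat) \<le> 2*k \<Longrightarrow> i = 0 \<or> (\<exists>t. t < k \<and> i = Suc (2*t)) \<or> (\<exists>t. t < k \<and> i = Suc (Suc (2*t)))"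
  by presburger
lemma P_simps: "P k 0 s = (if s = 0 then 0 else 4*k+1)"
  "P k (Suc (2*t)) s = (if s = 0 then t+1 else 2*k - t)"
  "P k (Suc (Suc (2*t))) s = (if s = 0 then 2*k+t+1 else 4*k - t)"
  unfolding P_def by auto
lemma T_simps: "T k 0 a = (if a=0 then 0 else if a=1 then 6*k+1 else 6*k+2)"
  "T k (Suc (2*t)) a = (if a = 0 then 2*t+1 else if a = 1 then 3*k - t else 5*k - t)"
  "T k (Suc (Suc (2*t))) a = (if a = 0 then 2*t+2 else if a = 1 then 4*k - t else 6*k - t)"
  unfolding T_def by auto
lemma two_cases: "(s::nat) < 2 \<Longrightarrow> s = 0 \<or> s = 1" by auto
lemma three_cases: "(s::nat) < 3 \<Longrightarrow> s = 0 \<or> s = 1 \<or> s = 2" by auto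
lemma P_inj: "i \<le> 2*k \<Longrightarrow> j \<le> 2*k \<Longrightarrow> s < 2 \<Longrightarrow> t < 2 \<Longrightarrow> P k i s = P k j t \<Longrightarrow> i = j \<and> s = t"
  apply (drule cases3, drule cases3[of j], drule two_cases, drule two_cases)
  apply (elim disjE exE conjE; simp add: P_simps; linarith?) done
lemma T_inj: "i \<le> 2*k \<Longrightarrow> j \<le> 2*k \<Longrightarrow> s < 3 \<Longrightarrow> t < 3 \<Longrightarrow> T k i s = T k j t \<Longrightarrow> i = j \<and> s = t"
  apply (drule cases3, drule cases3[of j], drule three_cases, drule three_cases)
  apply (elim disjE exE conjE; simp add: T_simps; linarith?) done
lemma P_lt: assumes "i \<le> 2*k" "s < 2" shows "P k i s < 4*k+2"
  using cases3[OF assms(1)] two_cases[OF assms(2)] by (elim disjE exE conjE; simp add: P_simps)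
lemma T_lt: assumes "i \<le> 2*k" "s < 3" shows "T k i s < 6*k+3"
  using cases3[OF assms(1)] three_cases[OF assms(2)] by (elim disjE exE conjE; simp add: T_simps)
lemma odd_form: "odd (i::nat) \<Longrightarrow> \<exists>t. i = Suc (2*t)" by presburger
lemma even_form: "even (i::nat) \<Longrightarrow> 0 < i \<Longrightarrow> \<exists>t. i = Suc (Suc (2*t))" by presburger
lemma Q0: "P k 0 0 + P k 0 1 = 4*k+1" unfolding P_def by simp
lemma Qo: "odd i \<Longrightarrow> i \<le> 2*k \<Longrightarrow> P k i 0 + P k i 1 = 2*k+1"
  by (drule odd_form) (auto simp: P_simps)
lemma Qe: "even i \<Longrightarrow> 0 < i \<Longrightarrow> i \<le> 2*k \<Longrightarrow> P k i 0 + P k i 1 = 6*k+1"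
  by (drule even_form, assumption) (auto simp: P_simps)
lemma T0: "T k 0 0 + T k 0 1 + T k 0 2 = 12*k+3" unfolding T_def by simp
lemma To: "odd i \<Longrightarrow> i \<le> 2*k \<Longrightarrow> T k i 0 + T k i 1 + T k i 2 = 8*k+1"
  by (drule odd_form) (auto simp: T_simps)
lemma Te: "even i \<Longrightarrow> 0 < i \<Longrightarrow> i \<le> 2*k \<Longrightarrow> T k i 0 + T k i 1 + T k i 2 = 10*k+2"
  by (drule even_form, assumption) (auto simp: T_simps)


abbreviation VV :: "nat \<Rightarrow> nat \<Rightarrow> (nat \<times> nat) set" where
  "VV m n \<equiv> lex_V (wheel_V m) (empty_V n)"
abbreviation AA :: "nat \<Rightarrow> nat \<times> nat \<Rightarrow> nat \<times> nat \<Rightarrow> bool" where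
  "AA m \<equiv> lex_adj (wheel_adj m) empty_adj"

lemma VV_eq: "VV m n = {0..m} \<times> {..<n}"
  by (auto simp: lex_V_def wheel_V_def empty_V_def)

lemma AA_eq: "AA m u v = wheel_adj m (fst u) (fst v)"
  by (simp add: lex_adj_def empty_adj_def)

lemma nbhd_eq: "nbhd (VV m n) (AA m) u = {j\<in>{0..m}. wheel_adj m (fst u) j} \<times> {..<n}"
  by (auto simp: nbhd_def VV_eq AA_eq)

lemma vweight_eq: "vweight (VV m n) (AA m) f u =
   (\<Sum>j\<in>{j\<in>{0..m}. wheel_adj m (fst u) j}. \<Sum>b<n. f (j,b))"
  unfolding vweight_def nbhd_eq by (simp add: sum.cartesian_product)

lemma mod_m: "1 \<le> i \<Longrightarrow> i \<le> m \<Longrightarrow> i mod m = (if i = m then 0 else (i::nat))"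
  by auto

lemma wadj_cyc: "1 \<le> i \<Longrightarrow> i \<le> m \<Longrightarrow> 1 \<le> j \<Longrightarrow> j \<le> m \<Longrightarrow> m > 3 \<Longrightarrow>
   wheel_adj m i j \<longleftrightarrow> (j = (if i = m then 1 else i + 1) \<or> i = (if j = m then 1 else j + 1))"
  unfolding wheel_adj_def using mod_m[of i m] mod_m[of j m] by auto

lemma nb0: "{j\<in>{0..m}. wheel_adj m 0 j} = {1..m}"
  by (auto simp: wheel_adj_def)

lemma nbi: assumes "1 \<le> i" "i \<le> m" "m > 3"
  shows "{j\<in>{0..m}. wheel_adj m i j} = {0, (if i = 1 then m else i - 1), (if i = m then 1 else i + 1)}"
proof -
  have "j \<in> {j\<in>{0..m}. wheel_adj m i j} \<longleftrightarrow> j \<in> {0, (if i = 1 then m else i - 1), (if i = m then 1 else i + 1)}" for j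
  proof (cases "j = 0")
    case True then show ?thesis using assms by (auto simp: wheel_adj_def)
  next
    case False
    then show ?thesis
    proof (cases "j \<le> m")
      case True
      then show ?thesis using wadj_cyc[of i m j] assms \<open>j \<noteq> 0\<close> by auto
    next
      case False
      then show ?thesis using assms by auto
    qed
  qed
  then show ?thesis by blast
qed

locale wcfg =
  fixes m n :: nat and f :: "nat \<times> nat \<Rightarrow> nat" and c ra rb :: nat
  assumes m3: "m > 3" and mev: "even m"
  and Rc: "(\<Sum>b<n. f (0,b)) = c"
  and Ra: "\<And>j. 1 \<le> j \<Longrightarrow> j \<le> m \<Longrightarrow> odd j \<Longrightarrow> (\<Sum>b<n. f (j,b)) = ra"
  and Rb: "\<And>j. 1 \<le> j \<Longrightarrow> j \<le> m \<Longrightarrow> even j \<Longrightarrow> (\<Sum>b<n. f (j,b)) = rb"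
  and ne: "ra \<noteq> rb" and ca: "c < 2*ra" and cb: "c < 2*rb"
begin

definition R where "R j = (\<Sum>b<n. f (j,b))"
definition W0 where "W0 = (\<Sum>j\<in>{1..m}. R j)"

lemma W0_ge: "W0 \<ge> 2*ra + 2*rb"
proof -
  have "(\<Sum>j\<in>{1,2,3,4}. R j) \<le> W0" unfolding W0_def
    by (rule sum_mono2) (use m3 in auto)
  moreover have "(\<Sum>j\<in>{1,2,3,4}. R j) = R 1 + R 2 + R 3 + R 4" by simp
  moreover have "R 1 = ra" "R 3 = ra" "R 2 = rb" "R 4 = rb"
    unfolding R_def using Ra[of 1] Ra[of 3] Rb[of 2] Rb[of 4] m3 by auto
  ultimately show ?thesis by linarith
qed

definition wt where "wt i = (if i = 0 then W0 else if odd i then c + 2*rb else c + 2*ra)"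

lemma weight: assumes "i \<le> m" shows "vweight (VV m n) (AA m) f (i,a) = wt i"
proof (cases "i = 0")
  case True
  have "vweight (VV m n) (AA m) f (i,a) = (\<Sum>j\<in>{j\<in>{0..m}. wheel_adj m 0 j}. \<Sum>b<n. f (j,b))"
    using True by (simp only: vweight_eq fst_conv)
  also have "\<dots> = (\<Sum>j\<in>{1..m}. \<Sum>b<n. f (j,b))" by (simp only: nb0)
  finally show ?thesis using True by (simp add: wt_def W0_def R_def)
next
  case False
  define p where "p = (if i = 1 then m else i - 1)"
  define q where "q = (if i = m then 1 else i + 1)"
  have pq: "p \<noteq> q" "p \<noteq> 0" "q \<noteq> 0" "p \<le> m" "q \<le> m" using m3 False assms by (auto simp: p_def q_def)
  have par: "odd p = even i" "odd q = even i" using mev False assms by (auto simp: p_def q_def)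
  have S: "{j\<in>{0..m}. wheel_adj m i j} = {0,p,q}"
    using nbi[of i m] False assms m3 unfolding p_def q_def by simp
  have "vweight (VV m n) (AA m) f (i,a) = (\<Sum>j\<in>{0,p,q}. R j)"
    by (simp only: vweight_eq fst_conv S R_def)
  also have "\<dots> = R 0 + R p + R q" using pq by simp
  also have "\<dots> = wt i"
    using Rc Ra[of p] Rb[of p] Ra[of q] Rb[of q] pq par False unfolding wt_def R_def
    by (cases "odd i") auto
  finally show ?thesis .
qed

lemma wt_ne: "i \<le> m \<Longrightarrow> j \<le> m \<Longrightarrow> wheel_adj m i j \<Longrightarrow> wt i \<noteq> wt j"
proof -
  assume ij: "i \<le> m" "j \<le> m" "wheel_adj m i j"
  have W: "W0 > c + 2*rb" "W0 > c + 2*ra" using W0_ge ca cb by linarith+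
  show ?thesis
  proof (cases "i = 0 \<or> j = 0")
    case True
    then show ?thesis using ij W unfolding wt_def by (auto simp: wheel_adj_def)
  next
    case False
    then have "1 \<le> i" "1 \<le> j" by auto
    with wadj_cyc[of i m j] ij m3 have "j = (if i = m then 1 else i + 1) \<or> i = (if j = m then 1 else j + 1)" by auto
    then have "odd i \<noteq> odd j" using mev by (auto split: if_splits)
    then show ?thesis using False ne unfolding wt_def by auto
  qed
qed

lemma result: assumes "bij_betw f (VV m n) {1..card (VV m n)}"
  shows "local_dist_antimagic (VV m n) (AA m) f \<and> card (vweight (VV m n) (AA m) f ` VV m n) \<le> 3"
proof
  show "local_dist_antimagic (VV m n) (AA m) f"
    unfolding local_dist_antimagic_def
  proof (intro conjI assms ballI impI)
    fix u v assume "u \<in> VV m n" "v \<in> VV m n" "AA m u v"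
    then show "vweight (VV m n) (AA m) f u \<noteq> vweight (VV m n) (AA m) f v"
      using weight[of "fst u" "snd u"] weight[of "fst v" "snd v"] wt_ne[of "fst u" "fst v"]
      by (auto simp: VV_eq AA_eq)
  qed
  have "vweight (VV m n) (AA m) f ` VV m n \<subseteq> {W0, c + 2*rb, c + 2*ra}"
    using weight by (auto simp: VV_eq wt_def)
  then have "card (vweight (VV m n) (AA m) f ` VV m n) \<le> card {W0, c + 2*rb, c + 2*ra}"
    by (rule card_mono[rotated]) simp
  also have "\<dots> \<le> 3" by (simp add: card_insert_if)
  finally show "card (vweight (VV m n) (AA m) f ` VV m n) \<le> 3" .
qed
end

lemma lower: assumes "m > 3" "n > 0" "local_dist_antimagic (VV m n) (AA m) f"
  shows "card (vweight (VV m n) (AA m) f ` VV m n) \<ge> 3"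
proof -
  let ?w = "vweight (VV m n) (AA m) f"
  have mem: "(0,0) \<in> VV m n" "(1,0) \<in> VV m n" "(2,0) \<in> VV m n" using assms by (auto simp: VV_eq)
  have adj: "AA m (0,0) (1,0)" "AA m (0,0) (2,0)" "AA m (1,0) (2,0)"
    using assms(1) by (auto simp: AA_eq wheel_adj_def)
  have d: "?w (0,0) \<noteq> ?w (1,0)" "?w (0,0) \<noteq> ?w (2,0)" "?w (1,0) \<noteq> ?w (2,0)"
    using assms(3) mem adj unfolding local_dist_antimagic_def by blast+
  have "card {?w (0,0), ?w (1,0), ?w (2,0)} = 3" using d by simp
  moreover have "{?w (0,0), ?w (1,0), ?w (2,0)} \<subseteq> ?w ` VV m n" using mem by auto
  moreover have "finite (?w ` VV m n)" by (simp add: VV_eq)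
  ultimately show ?thesis by (metis card_mono)
qed



definition lab :: "nat \<Rightarrow> nat \<Rightarrow> nat \<times> nat \<Rightarrow> nat" where
"lab m n x = (if even n then 1 + 2*(m+1)*(snd x div 2) + P (m div 2) (fst x) (snd x mod 2)
   else if snd x < 3 then 1 + T (m div 2) (fst x) (snd x)
   else 1 + 3*(m+1) + 2*(m+1)*((snd x - 3) div 2) + P (m div 2) (fst x) ((snd x - 3) mod 2))"

lemma divmod_unique: "r < (M::nat) \<Longrightarrow> r' < M \<Longrightarrow> M*q + r = M*q' + r' \<Longrightarrow> q = q' \<and> r = r'"
proof -
  assume a: "r < M" "r' < M" "M*q + r = M*q' + r'"
  have "(M*q + r) div M = q" using a(1) by simp
  moreover have "(M*q' + r') div M = q'" using a(2) by simp
  ultimately have "q = q'" using a(3) by simp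
  then show ?thesis using a(3) by simp
qed

lemma div2_eq: "(a::nat) div 2 = b div 2 \<Longrightarrow> a mod 2 = b mod 2 \<Longrightarrow> a = b"
  by (metis div_mult_mod_eq)

lemma lab_inj: assumes "m = 2*k"
  shows "inj_on (lab m n) ({0..m} \<times> {..<n})"
proof (rule inj_onI)
  fix x y assume x: "x \<in> {0..m} \<times> {..<n}" and y: "y \<in> {0..m} \<times> {..<n}" and e: "lab m n x = lab m n y"
  obtain i a where xi: "x = (i,a)" by fastforce
  obtain j b where yj: "y = (j,b)" by fastforce
  have ij: "i \<le> 2*k" "j \<le> 2*k" "a < n" "b < n" using x y xi yj assms by auto
  have mk: "m div 2 = k" using assms by simp
  have Pl: "P k i (a mod 2) < 2*(m+1)" "P k j (b mod 2) < 2*(m+1)"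
    "P k i ((a-3) mod 2) < 2*(m+1)" "P k j ((b-3) mod 2) < 2*(m+1)"
    using P_lt[of i k] P_lt[of j k] ij assms by auto
  show "x = y"
  proof (cases "even n")
    case True
    then have "2*(m+1)*(a div 2) + P k i (a mod 2) = 2*(m+1)*(b div 2) + P k j (b mod 2)"
      using e xi yj mk by (simp add: lab_def)
    from divmod_unique[OF Pl(1) Pl(2) this] have "a div 2 = b div 2" "P k i (a mod 2) = P k j (b mod 2)" by auto
    moreover from P_inj[OF ij(1) ij(2) _ _ this(2)] have "i = j" "a mod 2 = b mod 2" by auto
    ultimately have "a = b" "i = j" using div2_eq by blast+
    then show ?thesis using xi yj by simp
  next
    case False
    show ?thesis
    proof (cases "a < 3")
      case a3: True
      show ?thesis
      proof (cases "b < 3")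
        case True
        then have "T k i a = T k j b" using e xi yj mk False a3 by (simp add: lab_def)
        from T_inj[OF ij(1) ij(2) a3 True this] show ?thesis using xi yj by simp
      next
        case b3: False
        have "T k i a < 3*(m+1)" using T_lt[OF ij(1) a3] assms by simp
        then show ?thesis using e xi yj mk False a3 b3 by (simp add: lab_def)
      qed
    next
      case a3: False
      show ?thesis
      proof (cases "b < 3")
        case True
        have "T k j b < 3*(m+1)" using T_lt[OF ij(2) True] assms by simp
        then show ?thesis using e xi yj mk False a3 True by (simp add: lab_def)
      next
        case b3: False
        then have "2*(m+1)*((a-3) div 2) + P k i ((a-3) mod 2) = 2*(m+1)*((b-3) div 2) + P k j ((b-3) mod 2)"
          using e xi yj mk False a3 by (simp add: lab_def)
        from divmod_unique[OF Pl(3) Pl(4) this] have "(a-3) div 2 = (b-3) div 2" "P k i ((a-3) mod 2) = P k j ((b-3) mod 2)" by auto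
        moreover from P_inj[OF ij(1) ij(2) _ _ this(2)] have "i = j" "(a-3) mod 2 = (b-3) mod 2" by auto
        ultimately have "a - 3 = b - 3" "i = j" using div2_eq by blast+
        then show ?thesis using xi yj a3 b3 by auto
      qed
    qed
  qed
qed

lemma lab_range: assumes "m = 2*k" "x \<in> {0..m} \<times> {..<n}" "n > 1"
  shows "lab m n x \<in> {1..(m+1)*n}"
proof -
  obtain i a where xi: "x = (i,a)" by fastforce
  have ij: "i \<le> 2*k" "a < n" using assms xi by auto
  have mk: "m div 2 = k" using assms by simp
  show ?thesis
  proof (cases "even n")
    case True
    have "a div 2 + 1 \<le> n div 2" using ij True by presburger
    then have "2*(m+1)*(a div 2 + 1) \<le> 2*(m+1)*(n div 2)" by (rule mult_le_mono2)
    moreover have "2*(m+1)*(n div 2) = (m+1)*n" using True by simp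
    moreover have "P k i (a mod 2) < 2*(m+1)" using P_lt[of i k "a mod 2"] ij assms by simp
    ultimately show ?thesis using xi mk True by (simp add: lab_def algebra_simps)
  next
    case False
    show ?thesis
    proof (cases "a < 3")
      case True
      have "T k i a < 3*(m+1)" using T_lt[OF ij(1) True] assms by simp
      moreover have "3 \<le> n" using False assms(3) by presburger
      moreover have "3*(m+1) \<le> (m+1)*n" using \<open>3 \<le> n\<close> by (metis mult.commute mult_le_mono1)
      ultimately show ?thesis using xi mk True False by (simp add: lab_def)
    next
      case a3: False
      have "(a-3) div 2 + 1 \<le> (n-3) div 2" using ij False a3 by presburger
      then have h1: "2*(m+1)*((a-3) div 2 + 1) \<le> 2*(m+1)*((n-3) div 2)" by (rule mult_le_mono2)
      have h2: "2*(m+1)*((a-3) div 2 + 1) = 2*(m+1)*((a-3) div 2) + 2*(m+1)" by (simp only: distrib_left mult_1_right)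
      have lv: "lab m n x = 1 + 3*(m+1) + 2*(m+1)*((a-3) div 2) + P k i ((a-3) mod 2)"
        using xi mk False a3 by (simp add: lab_def)
      have h3: "3*(m+1) + 2*(m+1)*((n-3) div 2) = (m+1)*n"
      proof -
        have "2*((n-3) div 2) = n - 3" using False ij a3 by presburger
        then have "2*(m+1)*((n-3) div 2) = (m+1)*(n-3)" by (metis mult.assoc mult.commute)
        moreover have "(m+1)*(n-3) + 3*(m+1) = (m+1)*n"
        proof -
          have n3: "n - 3 + 3 = n" using ij a3 by simp
          have "(m+1)*(n-3) + 3*(m+1) = (m+1)*(n-3+3)" by (metis add_mult_distrib2 mult.commute)
          then show ?thesis using n3 by simp
        qed
        ultimately show ?thesis by simp
      qed
      have h4: "P k i ((a-3) mod 2) < 2*(m+1)" using P_lt[of i k "(a-3) mod 2"] ij assms by simp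
      show ?thesis unfolding lv atLeastAtMost_iff using h1 h2 h3 h4 by linarith
    qed
  qed
qed

lemma lab_bij: assumes "m = 2*k" "n > 1"
  shows "bij_betw (lab m n) (VV m n) {1..card (VV m n)}"
proof -
  have cV: "card (VV m n) = (m+1)*n" by (simp add: VV_eq card_cartesian_product)
  have sub: "lab m n ` VV m n \<subseteq> {1..(m+1)*n}" using lab_range[OF assms(1) _ assms(2)] by (auto simp: VV_eq)
  have inj: "inj_on (lab m n) (VV m n)" using lab_inj[OF assms(1)] by (simp add: VV_eq)
  have "card (lab m n ` VV m n) = card {1..(m+1)*n}" using card_image[OF inj] cV by simp
  then have "lab m n ` VV m n = {1..(m+1)*n}" using sub by (intro card_subset_eq) auto
  then show ?thesis using inj cV unfolding bij_betw_def by simp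
qed



lemma sum_pairs: "(\<Sum>a<2*p. g a) = (\<Sum>r<p. g (2*r) + g (2*r+1::nat)) "
proof (induction p)
  case (Suc p)
  have "{..<2*Suc p} = insert (2*p+1) (insert (2*p) {..<2*p})" by auto
  then show ?case using Suc by (simp add: ac_simps)
qed simp
lemma sum3: "(\<Sum>a<p+3. g a) = g 0 + g 1 + g 2 + (\<Sum>a<p. g (a+3::nat))"
proof (induction p)
  case 0
  have "{..<3::nat} = {0,1,2}" by auto
  then show ?case by (simp add: ac_simps)
next
  case (Suc p)
  have "Suc p + 3 = Suc (p+3)" by simp
  then have "(\<Sum>a<Suc p + 3. g a) = (\<Sum>a<p+3. g a) + g (p+3)" by (simp only: sum.lessThan_Suc)
  then show ?case using Suc by (simp add: ac_simps)
qed

lemma lab_e0: "even n \<Longrightarrow> lab m n (j, 2*r) = 1 + 2*(m+1)*r + P (m div 2) j 0" by (simp add: lab_def)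
lemma lab_e1: "even n \<Longrightarrow> lab m n (j, 2*r+1) = 1 + 2*(m+1)*r + P (m div 2) j 1" by (simp add: lab_def)
lemma lab_o0: "odd n \<Longrightarrow> lab m n (j, 2*r+3) = 1 + 3*(m+1) + 2*(m+1)*r + P (m div 2) j 0" by (simp add: lab_def)
lemma lab_o1: "odd n \<Longrightarrow> lab m n (j, 2*r+1+3) = 1 + 3*(m+1) + 2*(m+1)*r + P (m div 2) j 1"
proof -
  assume "odd n"
  moreover have "(2*r+1+3 - 3) div 2 = r" "(2*r+1+3 - 3) mod 2 = 1" by simp_all
  ultimately show ?thesis unfolding lab_def by simp
qed

lemma colsum_even: assumes "m = 2*k" "n = 2*p"
  shows "(\<Sum>a<n. lab m n (j,a)) = (\<Sum>r<p. 2 + 4*(m+1)*r) + p*(P k j 0 + P k j 1)"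
proof -
  have mk: "m div 2 = k" using assms by simp
  have "(\<Sum>a<n. lab m n (j,a)) = (\<Sum>r<p. lab m n (j,2*r) + lab m n (j,2*r+1))"
    using assms(2) sum_pairs by simp
  also have "\<dots> = (\<Sum>r<p. (2 + 4*(m+1)*r) + (P k j 0 + P k j 1))"
  proof (intro sum.cong refl)
    fix r assume "r \<in> {..<p}"
    have ev: "even n" using assms by simp
    show "lab m n (j,2*r) + lab m n (j,2*r+1) = (2 + 4*(m+1)*r) + (P k j 0 + P k j 1)"
      by (simp only: lab_e0[OF ev] lab_e1[OF ev] mk; simp add: algebra_simps)
  qed
  also have "\<dots> = (\<Sum>r<p. 2 + 4*(m+1)*r) + p*(P k j 0 + P k j 1)"
    unfolding sum.distrib by (simp add: distrib_left)
  finally show ?thesis .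
qed

lemma colsum_odd: assumes "m = 2*k" "n = 2*p+3"
  shows "(\<Sum>a<n. lab m n (j,a)) = 3 + (T k j 0 + T k j 1 + T k j 2) + (\<Sum>r<p. 2 + 6*(m+1) + 4*(m+1)*r) + p*(P k j 0 + P k j 1)"
proof -
  have mk: "m div 2 = k" using assms by simp
  have on: "odd n" using assms by simp
  have "(\<Sum>a<n. lab m n (j,a)) = lab m n (j,0) + lab m n (j,1) + lab m n (j,2) + (\<Sum>a<2*p. lab m n (j,a+3))"
    using assms(2) sum3 by simp
  also have "(\<Sum>a<2*p. lab m n (j,a+3)) = (\<Sum>r<p. lab m n (j,2*r+3) + lab m n (j,2*r+1+3))"
    using sum_pairs[of "\<lambda>a. lab m n (j,a+3)"] by simp
  also have "\<dots> = (\<Sum>r<p. (2 + 6*(m+1) + 4*(m+1)*r) + (P k j 0 + P k j 1))"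
  proof (intro sum.cong refl)
    fix r assume "r \<in> {..<p}"
    show "lab m n (j,2*r+3) + lab m n (j,2*r+1+3) = (2 + 6*(m+1) + 4*(m+1)*r) + (P k j 0 + P k j 1)"
      by (simp only: lab_o0[OF on] lab_o1[OF on] mk; simp add: algebra_simps)
  qed
  also have "\<dots> = (\<Sum>r<p. 2 + 6*(m+1) + 4*(m+1)*r) + p*(P k j 0 + P k j 1)"
    unfolding sum.distrib by (simp add: distrib_left)
  finally show ?thesis using on mk by (simp add: lab_def)
qed

lemma sums_exist: assumes "m = 2*k" "k \<ge> 2" "n > 1"
  shows "\<exists>c ra rb. wcfg m n (lab m n) c ra rb"
proof (cases "even n")
  case True
  then obtain p where p: "n = 2*p" by blast
  with assms have p1: "p \<ge> 1" by simp
  define D where "D = (\<Sum>r<p. 2 + 4*(m+1)*r)"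
  have pk: "p*k \<ge> 1" using p1 assms by simp
  show ?thesis
  proof (intro exI)
    show "wcfg m n (lab m n) (D + p*(4*k+1)) (D + p*(2*k+1)) (D + p*(6*k+1))"
    proof
      show "m > 3" "even m" using assms by auto
      show "(\<Sum>b<n. lab m n (0, b)) = D + p * (4 * k + 1)"
        using colsum_even[OF assms(1) p] Q0 D_def by simp
      show "(\<Sum>b<n. lab m n (j, b)) = D + p * (2 * k + 1)" if "1 \<le> j" "j \<le> m" "odd j" for j
        using colsum_even[OF assms(1) p] Qo[of j k] that assms D_def by simp
      show "(\<Sum>b<n. lab m n (j, b)) = D + p * (6 * k + 1)" if "1 \<le> j" "j \<le> m" "even j" for j
        using colsum_even[OF assms(1) p] Qe[of j k] that assms D_def by simp
      show "D + p * (2 * k + 1) \<noteq> D + p * (6 * k + 1)" "D + p * (4 * k + 1) < 2 * (D + p * (2 * k + 1))"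
        "D + p * (4 * k + 1) < 2 * (D + p * (6 * k + 1))"
        using pk p1 by (simp_all add: algebra_simps)
    qed
  qed
next
  case False
  have "n = 2*((n-3) div 2)+3" using False assms(3) by presburger
  then obtain p where p: "n = 2*p+3" by blast
  define E where "E = (\<Sum>r<p. 2 + 6*(m+1) + 4*(m+1)*r)"
  show ?thesis
  proof (intro exI)
    show "wcfg m n (lab m n) (3 + (12*k+3) + E + p*(4*k+1)) (3 + (8*k+1) + E + p*(2*k+1)) (3 + (10*k+2) + E + p*(6*k+1))"
    proof
      show "m > 3" "even m" using assms by auto
      show "(\<Sum>b<n. lab m n (0, b)) = (3 + (12*k+3) + E + p*(4*k+1))"
        using colsum_odd[OF assms(1) p] Q0 T0 E_def by simp
      show "(\<Sum>b<n. lab m n (j, b)) = (3 + (8*k+1) + E + p*(2*k+1))" if "1 \<le> j" "j \<le> m" "odd j" for j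
        using colsum_odd[OF assms(1) p] Qo[of j k] To[of j k] that assms E_def by simp
      show "(\<Sum>b<n. lab m n (j, b)) = (3 + (10*k+2) + E + p*(6*k+1))" if "1 \<le> j" "j \<le> m" "even j" for j
        using colsum_odd[OF assms(1) p] Qe[of j k] Te[of j k] that assms E_def by simp
      show "(3 + (8*k+1) + E + p*(2*k+1)) \<noteq> (3 + (10*k+2) + E + p*(6*k+1))"
        "(3 + (12*k+3) + E + p*(4*k+1)) < 2 * (3 + (8*k+1) + E + p*(2*k+1))"
        "(3 + (12*k+3) + E + p*(4*k+1)) < 2 * (3 + (10*k+2) + E + p*(6*k+1))"
        using assms by (simp_all add: algebra_simps)
    qed
  qed
qed

theorem mainTheorem19:
  fixes n m :: nat
  assumes "n > 1" and "m > 3" and "even m"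
  shows "chi_ld (lex_V (wheel_V m) (empty_V n)) (lex_adj (wheel_adj m) empty_adj) = 3"
proof -
  obtain k where mk: "m = 2*k" using assms(3) by blast
  have k2: "k \<ge> 2" using mk assms(2) by simp
  obtain c ra rb where st: "wcfg m n (lab m n) c ra rb" using sums_exist[OF mk k2 assms(1)] by blast
  let ?S = "{card (vweight (VV m n) (AA m) f ` VV m n) | f. local_dist_antimagic (VV m n) (AA m) f}"
  have r: "local_dist_antimagic (VV m n) (AA m) (lab m n) \<and> card (vweight (VV m n) (AA m) (lab m n) ` VV m n) \<le> 3"
    using wcfg.result[OF st lab_bij[OF mk assms(1)]] .
  have lo: "\<And>f. local_dist_antimagic (VV m n) (AA m) f \<Longrightarrow> card (vweight (VV m n) (AA m) f ` VV m n) \<ge> 3"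
    using lower assms by simp
  have fin: "finite (VV m n)" by (simp add: VV_eq)
  have in3: "3 \<in> ?S" using r lo[of "lab m n"] by (intro CollectI exI[of _ "lab m n"]) simp
  have ge3: "\<And>y. y \<in> ?S \<Longrightarrow> y \<ge> 3" using lo by blast
  have "?S \<subseteq> {..card (VV m n)}"
  proof
    fix y assume "y \<in> ?S"
    then obtain f where "y = card (vweight (VV m n) (AA m) f ` VV m n)" by blast
    then show "y \<in> {..card (VV m n)}" using card_image_le[OF fin] by auto
  qed
  then have "finite ?S" by (rule finite_subset) simp
  then have "Min ?S = 3" using in3 ge3 by (intro Min_eqI)
  then show ?thesis unfolding chi_ld_def .
qed


end
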